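(* Let $E$ be a finite nonempty set, $X\in\mathcal{X}(2)\setminus\mathcal{X}^*(2)$, and let $f:2^E\to\mathbb{N}$ and $S,T\subseteq E$ satisfy: $X=\mathbb{B}_f(2)$; for every $U\subseteq E$ there is $\vec x\in\mathbb{B}_f(2)$ with $x(U)=f(U)$; and $f(S)=f(T)=f(S\cap T)=1$, $f(S\cup T)=2$. Then for every $\vec x\in\mathbb{B}_f(2)$ with $\mathrm{supp}(\vec x)\subseteq S\cup T$ we have $\mathrm{supp}(\vec x)\cap(S\cap T)=\emptyset$.
   Context: $\mathbb{N}=\{0,1,2,\dots\}$; $x(U)=\sum_{e\in U}x_e$; $\mathrm{supp}(\vec x)=\{e: x_e\neq0\}$. For $f:2^E\to\mathbb{N}$, $\mathbb{B}_f(d)=\{\vec x\in\mathbb{N}^E: x(U)\le f(U)\ \forall U\subseteq E,\ x(E)=d\}$. $f$ is strictly positive if $f(U)>0$ for all nonempty $U$, normalized if $f(\emptyset)=0$, monotonic if $f(U)\le f(V)$ for $U\subseteq V$. $\mathcal{X}(d)=\{\mathbb{B}_f(d): f \text{ strictly positive, normalized, monotonic}\}$, $\mathcal{X}^*(d)=\{\mathbb{B}_f(d): f\text{ strictly positive, normalized, monotonic, submodular}\}$. *)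

theory Defs
  imports Main
begin

text \<open>Vectors in N^E are functions 'a => nat vanishing outside the ground set E.
  Set functions f : 2^E -> N are functions 'a set => nat; only their values on subsets of E matter.\<close>

definition supp :: "('a \<Rightarrow> nat) \<Rightarrow> 'a set" where
  "supp x = {e. x e \<noteq> 0}"

definition polymatroid_slice :: "'a set \<Rightarrow> ('a set \<Rightarrow> nat) \<Rightarrow> nat \<Rightarrow> ('a \<Rightarrow> nat) set" where
  "polymatroid_slice E f d =
     {x. (\<forall>e. e \<notin> E \<longrightarrow> x e = 0) \<and> (\<forall>U. U \<subseteq> E \<longrightarrow> sum x U \<le> f U) \<and> sum x E = d}"

definition strictly_positive :: "'a set \<Rightarrow> ('a set \<Rightarrow> nat) \<Rightarrow> bool" where
  "strictly_positive E f \<longleftrightarrow> (\<forall>U. U \<subseteq> E \<longrightarrow> U \<noteq> {} \<longrightarrow> f U > 0)"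

definition normalized :: "('a set \<Rightarrow> nat) \<Rightarrow> bool" where
  "normalized f \<longleftrightarrow> f {} = 0"

definition monotonic :: "'a set \<Rightarrow> ('a set \<Rightarrow> nat) \<Rightarrow> bool" where
  "monotonic E f \<longleftrightarrow> (\<forall>U V. U \<subseteq> V \<longrightarrow> V \<subseteq> E \<longrightarrow> f U \<le> f V)"

definition submodular :: "'a set \<Rightarrow> ('a set \<Rightarrow> nat) \<Rightarrow> bool" where
  "submodular E f \<longleftrightarrow> (\<forall>U V. U \<subseteq> E \<longrightarrow> V \<subseteq> E \<longrightarrow> f (U \<union> V) + f (U \<inter> V) \<le> f U + f V)"

definition calX :: "'a set \<Rightarrow> nat \<Rightarrow> ('a \<Rightarrow> nat) set set" where
  "calX E d = {polymatroid_slice E f d | f. strictly_positive E f \<and> normalized f \<and> monotonic E f}"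

definition calX_star :: "'a set \<Rightarrow> nat \<Rightarrow> ('a \<Rightarrow> nat) set set" where
  "calX_star E d = {polymatroid_slice E f d | f.
     strictly_positive E f \<and> normalized f \<and> monotonic E f \<and> submodular E f}"

end

theory Submission
  imports Defs
begin

theorem lemma6p2:
  fixes E :: "'a set" and X :: "('a \<Rightarrow> nat) set" and f :: "'a set \<Rightarrow> nat" and S T :: "'a set"
  assumes "finite E" and "E \<noteq> {}"
    and "X \<in> calX E 2 - calX_star E 2"
    and "X = polymatroid_slice E f 2"
    and "\<forall>U. U \<subseteq> E \<longrightarrow> (\<exists>x\<in>polymatroid_slice E f 2. sum x U = f U)"
    and "S \<subseteq> E" and "T \<subseteq> E"
    and "f S = 1" and "f T = 1" and "f (S \<inter> T) = 1" and "f (S \<union> T) = 2"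
  shows "\<forall>x\<in>polymatroid_slice E f 2. supp x \<subseteq> S \<union> T \<longrightarrow> supp x \<inter> (S \<inter> T) = {}"
proof (intro ballI impI)
  fix x assume xs: "x \<in> polymatroid_slice E f 2" and sp: "supp x \<subseteq> S \<union> T"
  have le: "\<And>U. U \<subseteq> E \<Longrightarrow> sum x U \<le> f U" and tot: "sum x E = 2"
    using xs unfolding polymatroid_slice_def by auto
  have fS: "finite S" "finite T" using assms(1,6,7) finite_subset by auto
  have "sum x E = sum x (S \<union> T)"
    by (rule sum.mono_neutral_left[symmetric]) (use assms(1,6,7) sp in \<open>auto simp: supp_def\<close>)
  hence u: "sum x (S \<union> T) = 2" using tot by simp
  have "sum x (S \<union> T) + sum x (S \<inter> T) = sum x S + sum x T"
    using sum.union_inter[OF fS] .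
  moreover have "sum x S \<le> 1" "sum x T \<le> 1" using le[of S] le[of T] assms(6-9) by auto
  ultimately have z: "sum x (S \<inter> T) = 0" using u by linarith
  have "finite (S \<inter> T)" using fS by auto
  hence "\<forall>e\<in>S \<inter> T. x e = 0" using z by simp
  thus "supp x \<inter> (S \<inter> T) = {}" unfolding supp_def by auto
qed

end
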